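(* Let $n,i$ be natural numbers and let $A$ be a brace of cardinality $p^n$, where $p$ is a prime with $p>n+1$. Then $\mathrm{ann}(p^i)=\{a\in A: p^ia=0\}$ is an ideal of $A$.
   Context: A (left) brace is a set $A$ with binary operations $+,\circ$ such that $(A,+)$ is an abelian group, $(A,\circ)$ is a group, and $a\circ(b+c)+a=a\circ b+a\circ c$ for all $a,b,c$. Write $a*b=a\circ b-a-b$. An ideal of a brace $A$ is a subgroup $I$ of $(A,+)$ which is a normal subgroup of $(A,\circ)$ and satisfies $a*x\in I$ for all $a\in A$, $x\in I$; equivalently, an additive subgroup $I$ with $A*I\subseteq I$ and $I*A\subseteq I$. $p^ia$ denotes the $p^i$-fold additive multiple of $a$. *)

theory Defs
  imports "HOL-Algebra.Algebra" "HOL-Computational_Algebra.Primes"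
begin

definition add_grp :: "'a set \<Rightarrow> ('a \<Rightarrow> 'a \<Rightarrow> 'a) \<Rightarrow> 'a \<Rightarrow> 'a monoid" where
  "add_grp A ad z = \<lparr>carrier = A, monoid.mult = ad, one = z\<rparr>"

definition circ_grp :: "'a set \<Rightarrow> ('a \<Rightarrow> 'a \<Rightarrow> 'a) \<Rightarrow> 'a \<Rightarrow> 'a monoid" where
  "circ_grp A cm e = \<lparr>carrier = A, monoid.mult = cm, one = e\<rparr>"

definition brace :: "'a set \<Rightarrow> ('a \<Rightarrow> 'a \<Rightarrow> 'a) \<Rightarrow> 'a \<Rightarrow> ('a \<Rightarrow> 'a \<Rightarrow> 'a) \<Rightarrow> 'a \<Rightarrow> bool" where
  "brace A ad z cm e \<longleftrightarrow>
     comm_group (add_grp A ad z) \<and> group (circ_grp A cm e) \<and>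
     (\<forall>a\<in>A. \<forall>b\<in>A. \<forall>c\<in>A. ad (cm a (ad b c)) a = ad (cm a b) (cm a c))"

definition brace_star :: "'a set \<Rightarrow> ('a \<Rightarrow> 'a \<Rightarrow> 'a) \<Rightarrow> 'a \<Rightarrow> ('a \<Rightarrow> 'a \<Rightarrow> 'a) \<Rightarrow> 'a \<Rightarrow> 'a \<Rightarrow> 'a" where
  "brace_star A ad z cm a b =
     ad (ad (cm a b) (inv\<^bsub>add_grp A ad z\<^esub> a)) (inv\<^bsub>add_grp A ad z\<^esub> b)"

definition brace_ideal :: "'a set \<Rightarrow> ('a \<Rightarrow> 'a \<Rightarrow> 'a) \<Rightarrow> 'a \<Rightarrow> ('a \<Rightarrow> 'a \<Rightarrow> 'a) \<Rightarrow> 'a \<Rightarrow> 'a set \<Rightarrow> bool" where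
  "brace_ideal A ad z cm e I \<longleftrightarrow>
     subgroup I (add_grp A ad z) \<and> normal I (circ_grp A cm e) \<and>
     (\<forall>a\<in>A. \<forall>x\<in>I. brace_star A ad z cm a x \<in> I)"

definition add_mult :: "'a set \<Rightarrow> ('a \<Rightarrow> 'a \<Rightarrow> 'a) \<Rightarrow> 'a \<Rightarrow> nat \<Rightarrow> 'a \<Rightarrow> 'a" where
  "add_mult A ad z k a = a [^]\<^bsub>add_grp A ad z\<^esub> k"

definition ann :: "'a set \<Rightarrow> ('a \<Rightarrow> 'a \<Rightarrow> 'a) \<Rightarrow> 'a \<Rightarrow> nat \<Rightarrow> 'a set" where
  "ann A ad z k = {a \<in> A. add_mult A ad z k a = z}"

end

theory Submission
  imports Defs "HOL-Computational_Algebra.Polynomial" "HOL-Computational_Algebra.Primes"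
begin

locale brc =
  fixes A :: "'a set" and ad :: "'a \<Rightarrow> 'a \<Rightarrow> 'a" and z :: 'a and cm :: "'a \<Rightarrow> 'a \<Rightarrow> 'a" and e :: 'a
  assumes br: "brace A ad z cm e"
begin

abbreviation "G \<equiv> add_grp A ad z"
abbreviation "C \<equiv> circ_grp A cm e"

lemma cgG: "comm_group G" using br by (simp add: brace_def)
lemma gC: "group C" using br by (simp add: brace_def)
lemma gG: "group G" using cgG comm_group.axioms(2) by blast
sublocale Gg: comm_group G by (rule cgG)
sublocale Cg: group C by (rule gC)
lemma carrG[simp]: "carrier G = A" by (simp add: add_grp_def)
lemma multG[simp]: "monoid.mult G = ad" by (simp add: add_grp_def)
lemma oneG[simp]: "one G = z" by (simp add: add_grp_def)
lemma carrC[simp]: "carrier C = A" by (simp add: circ_grp_def)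
lemma multC[simp]: "monoid.mult C = cm" by (simp add: circ_grp_def)
lemma oneC[simp]: "one C = e" by (simp add: circ_grp_def)
lemma distr: "\<lbrakk>a\<in>A; b\<in>A; c\<in>A\<rbrakk> \<Longrightarrow> ad (cm a (ad b c)) a = ad (cm a b) (cm a c)"
  using br by (simp add: brace_def)

definition ng where "ng x = inv\<^bsub>G\<^esub> x"
definition sm :: "nat \<Rightarrow> 'a \<Rightarrow> 'a" where "sm k x = x [^]\<^bsub>G\<^esub> k"

lemma z_in[simp]: "z \<in> A" using Gg.one_closed by simp
lemma e_in[simp]: "e \<in> A" using Cg.one_closed by simp
lemma ad_closed[simp]: "x\<in>A \<Longrightarrow> y\<in>A \<Longrightarrow> ad x y \<in> A" using Gg.m_closed by fastforce
lemma cm_closed[simp]: "x\<in>A \<Longrightarrow> y\<in>A \<Longrightarrow> cm x y \<in> A" using Cg.m_closed by fastforce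
lemma ng_closed[simp]: "x\<in>A \<Longrightarrow> ng x \<in> A" unfolding ng_def using Gg.inv_closed by fastforce
lemma sm_closed[simp]: "x\<in>A \<Longrightarrow> sm k x \<in> A" unfolding sm_def using Gg.nat_pow_closed by fastforce
lemma ad_comm: "x\<in>A \<Longrightarrow> y\<in>A \<Longrightarrow> ad x y = ad y x" using Gg.m_comm by fastforce
lemma ad_assoc: "x\<in>A \<Longrightarrow> y\<in>A \<Longrightarrow> w\<in>A \<Longrightarrow> ad (ad x y) w = ad x (ad y w)" using Gg.m_assoc by fastforce
lemma ad_z[simp]: "x\<in>A \<Longrightarrow> ad x z = x" using Gg.r_one by fastforce
lemma z_ad[simp]: "x\<in>A \<Longrightarrow> ad z x = x" using Gg.l_one by fastforce
lemma ad_ng[simp]: "x\<in>A \<Longrightarrow> ad x (ng x) = z" unfolding ng_def using Gg.r_inv by fastforce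
lemma ng_ad[simp]: "x\<in>A \<Longrightarrow> ad (ng x) x = z" unfolding ng_def using Gg.l_inv by fastforce
lemma ad_cancel: "x\<in>A \<Longrightarrow> y\<in>A \<Longrightarrow> w\<in>A \<Longrightarrow> ad x y = ad x w \<longleftrightarrow> y = w"
  using Gg.l_cancel by fastforce
lemma ad_cancel2: "x\<in>A \<Longrightarrow> y\<in>A \<Longrightarrow> w\<in>A \<Longrightarrow> ad y x = ad w x \<longleftrightarrow> y = w"
  using Gg.r_cancel by fastforce
lemma ad_lcomm: "x\<in>A \<Longrightarrow> y\<in>A \<Longrightarrow> w\<in>A \<Longrightarrow> ad x (ad y w) = ad y (ad x w)"
  by (metis ad_assoc ad_comm)

lemmas adac = ad_assoc ad_comm ad_lcomm
lemma ad4: "p\<in>A \<Longrightarrow> q\<in>A \<Longrightarrow> r\<in>A \<Longrightarrow> w\<in>A \<Longrightarrow> ad (ad p q) (ad r w) = ad (ad p r) (ad q w)"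
  by (metis ad_assoc ad_lcomm ad_closed)
lemma ad_ng_l[simp]: "x\<in>A \<Longrightarrow> y\<in>A \<Longrightarrow> ad x (ad (ng x) y) = y" by (metis ad_assoc ad_ng ng_closed z_ad)
lemma ng_ad_l[simp]: "x\<in>A \<Longrightarrow> y\<in>A \<Longrightarrow> ad (ng x) (ad x y) = y" by (metis ad_assoc ng_ad ng_closed z_ad)
lemma ng_z[simp]: "ng z = z" unfolding ng_def using Gg.inv_one by simp
lemma ng_eq: "x\<in>A \<Longrightarrow> y\<in>A \<Longrightarrow> ad x y = z \<Longrightarrow> y = ng x" proof -
  assume h: "x\<in>A" "y\<in>A" "ad x y = z"
  hence "ad y x = z" using ad_comm by simp
  thus ?thesis using h Gg.inv_equality[of y x] by (simp add: ng_def)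
qed
lemma ng_ad_distr: "x\<in>A \<Longrightarrow> y\<in>A \<Longrightarrow> ng (ad x y) = ad (ng x) (ng y)"
  unfolding ng_def using Gg.inv_mult by simp
lemma ng_ng[simp]: "x\<in>A \<Longrightarrow> ng (ng x) = x" by (metis ng_eq ng_ad ng_closed)

lemma cm_e[simp]: "x\<in>A \<Longrightarrow> cm x e = x" using Cg.r_one by fastforce
lemma e_cm[simp]: "x\<in>A \<Longrightarrow> cm e x = x" using Cg.l_one by fastforce

lemma cm_z: assumes "a\<in>A" shows "cm a z = a"
proof -
  have "ad (cm a (ad z z)) a = ad (cm a z) (cm a z)" using distr[of a z z] assms by simp
  hence "ad (cm a z) a = ad (cm a z) (cm a z)" by simp
  thus ?thesis using ad_cancel assms by (simp add: cm_closed)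
qed

lemma e_z: "e = z" using cm_z[of e] e_cm by simp
lemma z_cm[simp]: "y\<in>A \<Longrightarrow> cm z y = y" using e_cm e_z by simp

definition lam where "lam a y = ad (cm a y) (ng a)"

lemma lam_closed[simp]: "a\<in>A \<Longrightarrow> y\<in>A \<Longrightarrow> lam a y \<in> A" by (simp add: lam_def)

lemma cm_lam: "a\<in>A \<Longrightarrow> y\<in>A \<Longrightarrow> cm a y = ad a (lam a y)"
  unfolding lam_def using ad_lcomm[of a "cm a y" "ng a"] by simp

lemma lam_add: assumes "a\<in>A" "x\<in>A" "y\<in>A" shows "lam a (ad x y) = ad (lam a x) (lam a y)"
proof -
  have "ad (cm a (ad x y)) a = ad (cm a x) (cm a y)" using distr assms by simp
  have "ad (lam a x) (lam a y) = ad (ad (cm a x) (cm a y)) (ad (ng a) (ng a))"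
    using assms by (simp add: lam_def ad4)
  also have "\<dots> = ad (ad (cm a (ad x y)) a) (ad (ng a) (ng a))" using \<open>ad (cm a (ad x y)) a = _\<close> by simp
  also have "\<dots> = ad (ad (cm a (ad x y)) (ng a)) (ad a (ng a))" using assms ad4[of "cm a (ad x y)" a "ng a" "ng a"] by simp
  also have "\<dots> = lam a (ad x y)" using assms by (simp add: lam_def)
  finally show ?thesis by simp
qed

lemma lam_z[simp]: "a\<in>A \<Longrightarrow> lam a z = z" by (simp add: lam_def cm_z)
lemma lam_e[simp]: "y\<in>A \<Longrightarrow> lam e y = y" by (simp add: lam_def e_z)

lemma lam_comp: assumes "a\<in>A" "b\<in>A" "y\<in>A" shows "lam (cm a b) y = lam a (lam b y)"
proof -
  have "cm (cm a b) y = cm a (cm b y)" using Cg.m_assoc assms by fastforce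
  also have "\<dots> = ad a (lam a (ad b (lam b y)))" using assms by (simp add: cm_lam)
  also have "\<dots> = ad (ad a (lam a b)) (lam a (lam b y))" using assms by (simp add: lam_add ad_assoc)
  also have "\<dots> = ad (cm a b) (lam a (lam b y))" using assms by (simp add: cm_lam)
  finally have "ad (cm a b) (lam (cm a b) y) = ad (cm a b) (lam a (lam b y))"
    using assms cm_lam[of "cm a b" y] by simp
  thus ?thesis using assms ad_cancel[of "cm a b"] by simp
qed

end

context brc begin

definition addv :: "('a \<Rightarrow> 'a) \<Rightarrow> bool" where
  "addv f \<longleftrightarrow> (\<forall>x\<in>A. f x \<in> A) \<and> (\<forall>x\<in>A. \<forall>y\<in>A. f (ad x y) = ad (f x) (f y))"

lemma addvD: "addv f \<Longrightarrow> x\<in>A \<Longrightarrow> f x \<in> A" "addv f \<Longrightarrow> x\<in>A \<Longrightarrow> y\<in>A \<Longrightarrow> f (ad x y) = ad (f x) (f y)"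
  by (auto simp: addv_def)

lemma addv_z: assumes "addv f" shows "f z = z"
proof -
  have "f z = ad (f z) (f z)" using addvD(2)[OF assms, of z z] by simp
  hence "ad (f z) z = ad (f z) (f z)" using addvD[OF assms] by simp
  thus ?thesis using ad_cancel addvD[OF assms] by (metis z_in)
qed

lemma sm_0[simp]: "sm 0 y = z" by (simp add: sm_def)
lemma sm_Suc: "y\<in>A \<Longrightarrow> sm (Suc k) y = ad y (sm k y)"
  unfolding sm_def using Gg.nat_pow_Suc2 by simp
lemma sm_1[simp]: "y\<in>A \<Longrightarrow> sm 1 y = y" by (simp add: sm_def)
lemma sm_Suc0[simp]: "y\<in>A \<Longrightarrow> sm (Suc 0) y = y" by (simp add: sm_def)
lemma sm_add: "y\<in>A \<Longrightarrow> sm (a+b) y = ad (sm a y) (sm b y)"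
  unfolding sm_def using Gg.nat_pow_mult by simp
lemma sm_mult: "y\<in>A \<Longrightarrow> sm (a*b) y = sm a (sm b y)"
  unfolding sm_def using Gg.nat_pow_pow by (simp add: mult.commute)
lemma sm_distr: "x\<in>A \<Longrightarrow> y\<in>A \<Longrightarrow> sm c (ad x y) = ad (sm c x) (sm c y)"
  unfolding sm_def using Gg.nat_pow_distrib by simp
lemma sm_z[simp]: "sm c z = z" unfolding sm_def using Gg.nat_pow_one by simp

lemma addv_sm: assumes "addv f" "y\<in>A" shows "f (sm c y) = sm c (f y)"
  by (induct c) (auto simp: sm_Suc addv_z[OF assms(1)] addvD[OF assms(1)] assms(2))

lemma addv_ng: assumes "addv f" "y\<in>A" shows "f (ng y) = ng (f y)"
proof -
  have "ad (f y) (f (ng y)) = z" using addvD[OF assms(1)] assms addv_z[OF assms(1)]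
    by (metis ad_ng ng_closed)
  thus ?thesis using ng_eq addvD[OF assms(1)] assms by simp
qed

lemma addv_comp: "addv f \<Longrightarrow> addv g \<Longrightarrow> addv (f \<circ> g)" by (simp add: addv_def)
lemma addv_id: "addv id" by (simp add: addv_def)
lemma addv_pow: "addv f \<Longrightarrow> addv (f ^^ k)"
  by (induct k) (auto simp: addv_id addv_def)

primrec evl :: "('a \<Rightarrow> 'a) \<Rightarrow> nat list \<Rightarrow> 'a \<Rightarrow> 'a" where
  "evl f [] y = z"
| "evl f (c # cs) y = ad (sm c y) (f (evl f cs y))"

definition ev :: "('a \<Rightarrow> 'a) \<Rightarrow> nat poly \<Rightarrow> 'a \<Rightarrow> 'a" where
  "ev f q = evl f (coeffs q)"

lemma evl_closed: "addv f \<Longrightarrow> y\<in>A \<Longrightarrow> evl f cs y \<in> A"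
  by (induct cs) (auto simp: addvD)

lemma ev_closed[simp]: "addv f \<Longrightarrow> y\<in>A \<Longrightarrow> ev f q y \<in> A"
  by (simp add: ev_def evl_closed)

lemma ev_0[simp]: "ev f 0 y = z" by (simp add: ev_def)

lemma ev_pCons: assumes "addv f" "y\<in>A" shows "ev f (pCons c q) y = ad (sm c y) (f (ev f q y))"
proof (cases "c = 0 \<and> q = 0")
  case True thus ?thesis using assms by (simp add: addv_z)
next
  case False thus ?thesis by (auto simp: ev_def cCons_def)
qed

lemma ev_add: assumes f: "addv f" and y: "y\<in>A" shows "ev f (q1 + q2) y = ad (ev f q1 y) (ev f q2 y)"
proof (induct q1 arbitrary: q2)
  case 0 thus ?case using f y by simp
next
  case (pCons a p)
  show ?case
  proof (cases q2)
    case (pCons b q)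
    have "ev f (pCons a p + q2) y = ad (sm (a+b) y) (f (ev f (p+q) y))"
      using pCons f y by (simp add: ev_pCons)
    also have "\<dots> = ad (ad (sm a y) (sm b y)) (ad (f (ev f p y)) (f (ev f q y)))"
      using \<open>\<And>q2. ev f (p + q2) y = _\<close> f y by (simp add: sm_add addvD)
    also have "\<dots> = ad (ev f (pCons a p) y) (ev f q2 y)"
      using pCons f y by (simp add: ev_pCons ad4 addvD)
    finally show ?thesis .
  qed
qed

lemma ev_addv: assumes "addv f" shows "addv (ev f q)"
  unfolding addv_def
proof (intro conjI ballI)
  fix x y assume x: "x\<in>A" and y: "y\<in>A"
  show "ev f q x \<in> A" using assms x by simp
  show "ev f q (ad x y) = ad (ev f q x) (ev f q y)"
  proof (induct q)
    case 0 thus ?case by simp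
  next
    case (pCons a p)
    thus ?case using assms x y
      by (simp add: ev_pCons sm_distr addvD ad4)
  qed
qed

lemma ev_smult: assumes f: "addv f" and y: "y\<in>A" shows "ev f (smult c q) y = sm c (ev f q y)"
proof (induct q)
  case 0 thus ?case by simp
next
  case (pCons a p)
  thus ?case using f y by (simp add: ev_pCons sm_distr addvD addv_sm sm_mult evl_closed)
qed

lemma ev_mult: assumes f: "addv f" and y: "y\<in>A" shows "ev f (q1 * q2) y = ev f q1 (ev f q2 y)"
  using y
proof (induct q1 arbitrary: y)
  case 0 thus ?case by simp
next
  case (pCons a p)
  have "ev f (pCons a p * q2) y = ad (ev f (smult a q2) y) (ev f (pCons 0 (p * q2)) y)"
    using f pCons by (simp add: ev_add)
  also have "\<dots> = ad (sm a (ev f q2 y)) (f (ev f p (ev f q2 y)))"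
    using f pCons by (simp add: ev_smult ev_pCons addvD)
  also have "\<dots> = ev f (pCons a p) (ev f q2 y)" using f pCons by (simp add: ev_pCons)
  finally show ?case .
qed

lemma ev_const: "addv f \<Longrightarrow> y\<in>A \<Longrightarrow> ev f [:c:] y = sm c y"
  by (simp add: ev_pCons addv_z)

lemma ev_one: "addv f \<Longrightarrow> y\<in>A \<Longrightarrow> ev f 1 y = y"
  using ev_const[of f y 1] by (simp add: one_pCons)

lemma ev_of_nat: "addv f \<Longrightarrow> y\<in>A \<Longrightarrow> ev f (of_nat c) y = sm c y"
  using ev_const by (simp add: of_nat_poly)

lemma ev_X: "addv f \<Longrightarrow> y\<in>A \<Longrightarrow> ev f [:0,1:] y = f y"
  by (simp add: ev_pCons addvD addv_z)

lemma ev_power: "addv f \<Longrightarrow> y\<in>A \<Longrightarrow> ev f (q ^ k) y = (ev f q ^^ k) y"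
proof (induct k arbitrary: y)
  case 0 thus ?case by (simp add: ev_one)
next
  case (Suc k) thus ?case by (simp add: ev_mult)
qed

lemma ev_comm: "addv f \<Longrightarrow> y\<in>A \<Longrightarrow> ev f q1 (ev f q2 y) = ev f q2 (ev f q1 y)"
  by (metis ev_mult mult.commute)

end

lemma frob:
  fixes x y :: "'b::comm_semiring_1"
  assumes p: "Factorial_Ring.prime (p::nat)"
  shows "\<exists>s. (x+y)^p = x^p + y^p + of_nat p * s"
proof -
  have p1: "p \<ge> 2" using p prime_ge_2_nat by blast
  have "(x+y)^p = (\<Sum>k\<le>p. of_nat (p choose k) * x^k * y^(p-k))" by (rule binomial_ring)
  also have "{..p} = insert 0 (insert p {1..<p})" using p1 by auto
  also have "(\<Sum>k\<in>insert 0 (insert p {1..<p}). of_nat (p choose k) * x^k * y^(p-k)) =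
      y^p + (x^p + (\<Sum>k\<in>{1..<p}. of_nat (p choose k) * x^k * y^(p-k)))"
    using p1 by (simp add: sum.insert)
  also have "(\<Sum>k\<in>{1..<p}. of_nat (p choose k) * x^k * y^(p-k)) =
     (\<Sum>k\<in>{1..<p}. of_nat p * (of_nat ((p choose k) div p) * x^k * y^(p-k)))"
  proof (rule sum.cong)
    fix k assume k: "k \<in> {1..<p}"
    have "p dvd (p choose k)" using k p1 p by (intro dvd_choose_prime) auto
    hence "(p choose k) = p * ((p choose k) div p)" by simp
    hence "(of_nat (p choose k) :: 'b) = of_nat p * of_nat ((p choose k) div p)"
      by (metis of_nat_mult)
    thus "of_nat (p choose k) * x^k * y^(p-k) = of_nat p * (of_nat ((p choose k) div p) * x^k * y^(p-k))"
      by (simp add: mult.assoc)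
  qed simp
  also have "\<dots> = of_nat p * (\<Sum>k\<in>{1..<p}. of_nat ((p choose k) div p) * x^k * y^(p-k))"
    by (simp add: sum_distrib_left)
  finally show ?thesis by (auto simp: add_ac)
qed

lemma onepow:
  fixes x :: "'b::comm_semiring_1"
  assumes p: "Factorial_Ring.prime (p::nat)"
  shows "\<exists>r. (1+x)^(p^m) = 1 + x^(p^m) + of_nat p * r"
proof (induct m)
  case 0 show ?case by (rule exI[of _ 0]) (simp add: add_ac)
next
  case (Suc m)
  then obtain r where r: "(1+x)^(p^m) = 1 + x^(p^m) + of_nat p * r" by blast
  obtain s1 where s1: "((1 + x^(p^m)) + of_nat p * r)^p = (1 + x^(p^m))^p + (of_nat p * r)^p + of_nat p * s1"
    using frob[OF p] by blast
  obtain s2 where s2: "(1 + x^(p^m))^p = 1^p + (x^(p^m))^p + of_nat p * s2"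
    using frob[OF p] by blast
  have p1: "p \<ge> 1" using p prime_ge_1_nat by blast
  have pp: "(of_nat p * r)^p = (of_nat p :: 'b) * (of_nat p ^ (p-1) * r^p)"
    using p1 by (metis (no_types) mult.assoc power_mult_distrib power_eq_if not_one_le_zero)
  have "(1+x)^(p^Suc m) = ((1+x)^(p^m))^p" by (simp add: power_mult[symmetric] mult.commute)
  also have "\<dots> = 1 + x^(p^Suc m) + of_nat p * (s2 + of_nat p ^ (p-1) * r^p + s1)"
    using r s1 s2 pp by (simp add: power_mult[symmetric] mult.commute distrib_left add_ac)
  finally show ?case by blast
qed

lemma Xpow: "([:0,1:] :: 'b::comm_semiring_1 poly)^n = monom 1 n"
proof (induct n)
  case 0 thus ?case by (simp add: one_pCons)
next
  case (Suc n) thus ?case by (simp add: monom_Suc)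
qed

lemma smult_Suc0[simp]: "smult (Suc 0) q = q" by (simp add: poly_eq_iff)
lemma Xpow_nat: "([:0, Suc 0:] :: nat poly)^n = monom (Suc 0) n" using Xpow[where 'b=nat] by simp

fun Pp :: "nat \<Rightarrow> nat poly" where
  "Pp 0 = 0"
| "Pp (Suc m) = 1 + [:1,1:] * Pp m"

lemma coeff_Pp: "coeff (Pp m) k = m choose (k+1)"
proof (induct m arbitrary: k)
  case 0 thus ?case by simp
next
  case (Suc m)
  have "[:1,1:] * Pp m = Pp m + pCons 0 (Pp m)" by (simp add: one_pCons)
  hence "coeff (Pp (Suc m)) k = coeff 1 k + coeff (Pp m) k + coeff (pCons 0 (Pp m)) k" by simp
  thus ?case using Suc by (cases k) (auto simp: coeff_pCons)
qed

lemma Pp_prime: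
  assumes p: "Factorial_Ring.prime (p::nat)"
  shows "\<exists>h. Pp p = [:0,1:]^(p-1) + of_nat p * (1 + [:0,1:] * h)"
proof -
  have p1: "p \<ge> 2" using p prime_ge_2_nat by blast
  define g where "g = Poly (map (\<lambda>k. (p choose (k+1)) div p) [0..<p-1])"
  have cg: "coeff g k = (if k < p - 1 then (p choose (k+1)) div p else 0)" for k
    by (simp add: g_def nth_default_def)
  obtain a h where gh: "g = pCons a h" by (cases g) auto
  have "a = 1" using cg[of 0] gh p1 by (simp add: coeff_pCons)
  have "Pp p = [:0,1:]^(p-1) + smult p g"
  proof (rule poly_eqI)
    fix k
    show "coeff (Pp p) k = coeff ([:0,1:]^(p-1) + smult p g) k"
    proof (cases "k < p - 1")
      case True
      have "p dvd (p choose (k+1))" using True p1 p by (intro dvd_choose_prime) auto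
      thus ?thesis using True by (simp add: coeff_Pp cg Xpow Xpow_nat)
    next
      case False
      thus ?thesis using p1 by (cases "k = p - 1") (auto simp: coeff_Pp cg Xpow Xpow_nat)
    qed
  qed
  moreover have "smult p g = of_nat p * (1 + [:0,1:] * h)"
    using gh \<open>a = 1\<close> by (simp add: of_nat_poly one_pCons)
  ultimately show ?thesis by auto
qed

context brc begin

definition Nop where "Nop a w = ad (lam a w) (ng w)"

lemma addv_ngf: "addv ng" by (simp add: addv_def ng_ad_distr)

lemma addv_lam: "a\<in>A \<Longrightarrow> addv (lam a)" by (simp add: addv_def lam_add)

lemma addv_Nop: assumes "a\<in>A" shows "addv (Nop a)"
  using assms by (simp add: addv_def Nop_def lam_add ng_ad_distr ad4)

lemma ev_T: assumes "a\<in>A" "w\<in>A" shows "ev (Nop a) [:1,1:] w = lam a w"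
proof -
  have "ev (Nop a) [:1,1:] w = ad w (Nop a w)"
    using assms addv_Nop[OF assms(1)] by (simp add: ev_pCons addv_z)
  also have "\<dots> = lam a w" using assms unfolding Nop_def using ad_lcomm[of w "lam a w" "ng w"] by simp
  finally show ?thesis .
qed

lemma ev_T': assumes "a\<in>A" "w\<in>A" shows "ev (Nop a) [:Suc 0,Suc 0:] w = lam a w"
  using ev_T[OF assms] by simp

lemma cpow_closed[simp]: "a\<in>A \<Longrightarrow> a [^]\<^bsub>C\<^esub> (m::nat) \<in> A" using Cg.nat_pow_closed by simp

lemma ev_Pp: assumes a: "a\<in>A" shows "ev (Nop a) (Pp m) a = a [^]\<^bsub>C\<^esub> m"
proof (induct m)
  case 0
  have "ev (Nop a) (Pp 0) a = z" by simp
  also have "z = e" by (rule e_z[symmetric])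
  also have "e = a [^]\<^bsub>C\<^esub> (0::nat)" by simp
  finally show ?case .
next
  case (Suc m)
  have f: "addv (Nop a)" using addv_Nop a by simp
  have "ev (Nop a) (Pp (Suc m)) a = ad a (lam a (a [^]\<^bsub>C\<^esub> m))"
    using Suc a f by (simp add: ev_add ev_one ev_mult ev_T ev_T' del: mult_pCons_left)
  also have "\<dots> = cm a (a [^]\<^bsub>C\<^esub> m)" using a by (simp add: cm_lam)
  also have "\<dots> = a [^]\<^bsub>C\<^esub> Suc m" using a Cg.nat_pow_Suc2 by simp
  finally show ?case .
qed

lemma lam_pow: assumes a: "a\<in>A" and y: "y\<in>A" shows "(lam a ^^ k) y = lam (a [^]\<^bsub>C\<^esub> k) y"
proof (induct k)
  case 0 thus ?case using y by simp
next
  case (Suc k)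
  have "(lam a ^^ Suc k) y = lam a (lam (a [^]\<^bsub>C\<^esub> k) y)" using Suc by simp
  also have "\<dots> = lam (cm a (a [^]\<^bsub>C\<^esub> k)) y" using a y by (simp add: lam_comp)
  also have "\<dots> = lam (a [^]\<^bsub>C\<^esub> Suc k) y" using a Cg.nat_pow_Suc2 by simp
  finally show ?case .
qed

lemma ev_commf: "addv f \<Longrightarrow> y\<in>A \<Longrightarrow> ev f q (f y) = f (ev f q y)"
  using ev_comm[of f y q "[:0,1:]"] ev_X by (simp add: ev_closed)

lemma ev_commfpow: "addv f \<Longrightarrow> y\<in>A \<Longrightarrow> ev f q ((f^^m) y) = (f^^m) (ev f q y)"
proof (induct m)
  case 0 thus ?case by simp
next
  case (Suc m)
  have "(f^^m) y \<in> A" using addv_pow[OF Suc(2)] Suc(3) addvD by blast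
  thus ?case using Suc ev_commf by simp
qed

lemma ev_Xpow: "addv f \<Longrightarrow> y\<in>A \<Longrightarrow> ev f ([:0,1:]^m) y = (f^^m) y"
proof (induct m arbitrary: y)
  case 0 thus ?case by (simp add: ev_one)
next
  case (Suc m)
  have "ev f ([:0,1:]^Suc m) y = ev f ([:0,1:]^m) (ev f [:0,1:] y)"
    using ev_mult[OF Suc(2) Suc(3), of "[:0,1:]^m" "[:0,1:]"] by (simp only: power_Suc2)
  moreover have "ev f [:0,1:] y = f y" using ev_X Suc by blast
  ultimately have "ev f ([:0,1:]^Suc m) y = ev f ([:0,1:]^m) (f y)" by simp
  also have "\<dots> = (f^^m) (f y)" using Suc addvD by simp
  finally show ?case by (simp add: funpow_Suc_right del: funpow.simps)
qed

lemma ev_Xpow': "addv f \<Longrightarrow> y\<in>A \<Longrightarrow> ev f ([:0,Suc 0:]^m) y = (f^^m) y"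
  using ev_Xpow by simp

lemma funpow_z: "addv f \<Longrightarrow> (f^^m) z = z"
  using addv_z[OF addv_pow] by blast

end

locale pbrc = brc +
  fixes p n :: nat
  assumes fin: "finite A" and cardA: "card A = p ^ n" and pr: "Factorial_Ring.prime p" and pn: "n + 1 < p"
begin

lemma p2: "p \<ge> 2" using pr Primes.prime_ge_2_nat by blast

lemma lamK: assumes a: "a\<in>A" and y: "y\<in>A" shows "(lam a ^^ (p^n)) y = y"
proof -
  have "a [^]\<^bsub>C\<^esub> (p^n) = e" using Cg.pow_order_eq_1[of a] a cardA by (simp add: Coset.order_def)
  thus ?thesis using lam_pow[OF a y, of "p^n"] y by simp
qed

lemma smpn: "y\<in>A \<Longrightarrow> sm (p^n) y = z"
  using Gg.power_order_eq_one[of y] fin cardA by (simp add: sm_def)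

lemma NK: assumes a: "a\<in>A" and y: "y\<in>A" shows "\<exists>w\<in>A. (Nop a ^^ (p^n)) y = sm p w"
proof -
  let ?N = "Nop a"
  have f: "addv ?N" using addv_Nop a by simp
  obtain r where r: "([:1,1:]::nat poly)^(p^n) = 1 + [:0,1:]^(p^n) + of_nat p * r"
    using onepow[OF pr, of "[:0,1:]::nat poly" n] by (auto simp: one_pCons)
  have "ev ?N ([:1,1:]^(p^n)) y = (ev ?N [:1,1:] ^^ (p^n)) y" using f y by (simp add: ev_power)
  also have "(ev ?N [:1,1:] ^^ (p^n)) y = (lam a ^^ (p^n)) y"
  proof -
    have "(ev ?N [:1,1:] ^^ k) y = (lam a ^^ k) y" for k
    proof (induct k)
      case (Suc k)
      have "(lam a ^^ k) y \<in> A" using addv_pow[OF addv_lam[OF a]] y addvD by blast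
      thus ?case using Suc ev_T[OF a] by simp
    qed simp
    thus ?thesis .
  qed
  also have "\<dots> = y" using lamK a y by simp
  finally have "y = ev ?N (1 + [:0,1:]^(p^n) + of_nat p * r) y" using r by simp
  also have "\<dots> = ad (ad y ((?N ^^ (p^n)) y)) (sm p (ev ?N r y))"
    using f y by (simp add: ev_add ev_one ev_mult ev_Xpow ev_Xpow' ev_of_nat del: mult_pCons_left mult_pCons_right)
  finally have eq: "y = ad (ad y ((?N ^^ (p^n)) y)) (sm p (ev ?N r y))" .
  have c1: "(?N ^^ (p^n)) y \<in> A" using addv_pow[OF f] y addvD by blast
  have c2: "sm p (ev ?N r y) \<in> A" using f y by simp
  have "ad y (ad ((?N ^^ (p^n)) y) (sm p (ev ?N r y))) = ad y z"
    using eq c1 c2 y by (simp add: ad_assoc)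
  hence "ad ((?N ^^ (p^n)) y) (sm p (ev ?N r y)) = z" using ad_cancel c1 c2 y by (metis ad_closed z_in)
  hence "(?N ^^ (p^n)) y = ng (sm p (ev ?N r y))" using ng_eq[OF c2 c1] ad_comm c1 c2 by simp
  also have "\<dots> = sm p (ng (ev ?N r y))" using addv_sm[OF addv_ngf] f y by simp
  finally show ?thesis using f y by auto
qed

end

context pbrc begin

lemma NKr: assumes a: "a\<in>A" and y: "y\<in>A" shows "\<exists>w\<in>A. (Nop a ^^ (p^n * r)) y = sm (p^r) w"
proof (induct r)
  case 0 thus ?case using y by (intro bexI[of _ y]) auto
next
  case (Suc r)
  let ?N = "Nop a"
  have f: "addv ?N" using addv_Nop a by simp
  from Suc obtain w where w: "w\<in>A" "(?N ^^ (p^n * r)) y = sm (p^r) w" by blast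
  obtain w' where w': "w'\<in>A" "(?N ^^ (p^n)) w = sm p w'" using NK[OF a w(1)] by blast
  have "(?N ^^ (p^n * Suc r)) y = (?N ^^ (p^n)) ((?N ^^ (p^n * r)) y)"
    by (simp add: funpow_add)
  also have "\<dots> = sm (p^r) ((?N ^^ (p^n)) w)" using w addv_sm[OF addv_pow[OF f]] by simp
  also have "\<dots> = sm (p^Suc r) w'" using w' by (simp add: sm_mult[symmetric] mult.commute)
  finally show ?case using w' by blast
qed

lemma Nbig: assumes a: "a\<in>A" and y: "y\<in>A" shows "(Nop a ^^ (p^n * n)) y = z"
  using NKr[OF a y, of n] smpn by auto

definition Bk where "Bk a k = (Nop a ^^ k) ` A"

lemma Bk_subset: "a\<in>A \<Longrightarrow> Bk a k \<subseteq> A"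
  using addv_pow[OF addv_Nop] addvD unfolding Bk_def by blast

lemma Bk_subgroup: assumes a: "a\<in>A" shows "subgroup (Bk a k) G"
proof -
  have f: "addv (Nop a ^^ k)" using addv_pow[OF addv_Nop[OF a]] .
  show ?thesis
  proof (rule Gg.subgroupI)
    show "Bk a k \<subseteq> carrier G" using Bk_subset[OF a] by simp
    show "Bk a k \<noteq> {}" unfolding Bk_def using z_in by blast
  next
    fix x assume "x \<in> Bk a k"
    then obtain u where u: "u\<in>A" "x = (Nop a ^^ k) u" unfolding Bk_def by blast
    have "inv\<^bsub>G\<^esub> x = (Nop a ^^ k) (ng u)" using addv_ng[OF f u(1)] u by (simp add: ng_def)
    thus "inv\<^bsub>G\<^esub> x \<in> Bk a k" using u unfolding Bk_def by auto
  next
    fix x y assume "x \<in> Bk a k" "y \<in> Bk a k"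
    then obtain u v where u: "u\<in>A" "x = (Nop a ^^ k) u" and v: "v\<in>A" "y = (Nop a ^^ k) v"
      unfolding Bk_def by blast
    have "x \<otimes>\<^bsub>G\<^esub> y = (Nop a ^^ k) (ad u v)" using addvD(2)[OF f u(1) v(1)] u v by simp
    thus "x \<otimes>\<^bsub>G\<^esub> y \<in> Bk a k" using u v unfolding Bk_def by auto
  qed
qed

lemma Bk_card: assumes a: "a\<in>A" shows "\<exists>i. card (Bk a k) = p^i"
proof -
  have "card (rcosets\<^bsub>G\<^esub> (Bk a k)) * card (Bk a k) = p^n"
    using Gg.lagrange[OF Bk_subgroup[OF a]] cardA by (simp add: Coset.order_def)
  hence "card (Bk a k) dvd p^n" by (metis dvd_triv_right)
  thus ?thesis using divides_primepow_nat[OF pr] by blast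
qed

lemma Bk_Suc: "Bk a (Suc k) = Nop a ` Bk a k" unfolding Bk_def by (simp add: image_comp)

lemma Bk_Suc_sub: assumes a: "a\<in>A" shows "Bk a (Suc k) \<subseteq> Bk a k"
proof
  fix x assume "x \<in> Bk a (Suc k)"
  then obtain u where u: "u\<in>A" "x = (Nop a ^^ Suc k) u" unfolding Bk_def by blast
  hence "x = (Nop a ^^ k) (Nop a u)" by (simp add: funpow_Suc_right del: funpow.simps)
  moreover have "Nop a u \<in> A" using addv_Nop[OF a] addvD u by blast
  ultimately show "x \<in> Bk a k" unfolding Bk_def by blast
qed

lemma Bk_stable: assumes "Bk a (Suc k) = Bk a k" shows "Bk a (k + m) = Bk a k"
proof (induct m)
  case (Suc m)
  have "Bk a (k + Suc m) = Nop a ` Bk a (k + m)" using Bk_Suc by simp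
  also have "\<dots> = Nop a ` Bk a k" using Suc by simp
  also have "\<dots> = Bk a k" using assms Bk_Suc by simp
  finally show ?case .
qed simp

lemma Bk_big: assumes a: "a\<in>A" shows "Bk a (k + p^n * n) = {z}"
proof -
  have "(Nop a ^^ (k + p^n*n)) y = z" if "y\<in>A" for y
    using Nbig[OF a that] funpow_z[OF addv_Nop[OF a]] by (simp add: funpow_add)
  hence "\<forall>y\<in>A. (Nop a ^^ (k + p^n*n)) y = z" by blast
  thus ?thesis unfolding Bk_def using z_in by (metis (no_types, lifting) empty_iff image_cong image_constant_conv)
qed

lemma fin_Bk: "a\<in>A \<Longrightarrow> finite (Bk a k)" using Bk_subset fin finite_subset by blast

lemma Bk_card_le: assumes a: "a\<in>A" shows "card (Bk a k) \<le> p^(n-k)"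
proof (induct k)
  case 0 thus ?case unfolding Bk_def using cardA by simp
next
  case (Suc k)
  show ?case
  proof (cases "Bk a (Suc k) = Bk a k")
    case True
    hence "Bk a k = {z}" using Bk_stable[OF True, of "p^n*n"] Bk_big[OF a, of k] by simp
    hence "card (Bk a (Suc k)) = 1" using True by simp
    thus ?thesis using p2 by simp
  next
    case False
    hence lt: "card (Bk a (Suc k)) < card (Bk a k)"
      using Bk_Suc_sub[OF a] fin_Bk[OF a] by (simp add: psubset_card_mono psubsetI)
    obtain i where i: "card (Bk a (Suc k)) = p^i" using Bk_card[OF a] by blast
    obtain j where j: "card (Bk a k) = p^j" using Bk_card[OF a] by blast
    have "i < j" using lt i j p2 by (metis power_less_imp_less_exp one_less_numeral_iff semiring_norm(76) order_less_le_trans)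
    moreover have "j \<le> n - k" using Suc j p2 by (metis power_le_imp_le_exp less_le_trans one_less_numeral_iff semiring_norm(76))
    ultimately have "i \<le> n - Suc k" by simp
    thus ?thesis using i p2 by (simp add: power_increasing)
  qed
qed

lemma Nnil: assumes a: "a\<in>A" and y: "y\<in>A" and m: "m \<ge> n" shows "(Nop a ^^ m) y = z"
proof -
  have "card (Bk a n) \<le> 1" using Bk_card_le[OF a, of n] by simp
  moreover have "z \<in> Bk a n" unfolding Bk_def using funpow_z[OF addv_Nop[OF a]] z_in by (metis image_eqI)
  moreover have "(Nop a ^^ n) y \<in> Bk a n" unfolding Bk_def using y by blast
  ultimately have "(Nop a ^^ n) y = z" using fin_Bk[OF a]
    by (metis card_le_Suc0_iff_eq One_nat_def)
  hence "(Nop a ^^ (m - n)) ((Nop a ^^ n) y) = z" using funpow_z[OF addv_Nop[OF a]] by simp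
  moreover have "(Nop a ^^ m) y = (Nop a ^^ (m - n)) ((Nop a ^^ n) y)"
    using m funpow_add[of "m-n" n "Nop a"] by simp
  ultimately show ?thesis by simp
qed

end

context brc begin
lemma cm_assoc: "x\<in>A \<Longrightarrow> y\<in>A \<Longrightarrow> w\<in>A \<Longrightarrow> cm (cm x y) w = cm x (cm y w)"
  using Cg.m_assoc by fastforce
lemma conj_pow: assumes g: "g\<in>A" and h: "h\<in>A"
  shows "(g \<otimes>\<^bsub>C\<^esub> h \<otimes>\<^bsub>C\<^esub> inv\<^bsub>C\<^esub> g) [^]\<^bsub>C\<^esub> (k::nat) = g \<otimes>\<^bsub>C\<^esub> (h [^]\<^bsub>C\<^esub> k) \<otimes>\<^bsub>C\<^esub> inv\<^bsub>C\<^esub> g"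
proof (induct k)
  case 0 thus ?case using g Cg.r_inv[of g] by simp
next
  case (Suc k)
  have c: "inv\<^bsub>C\<^esub> g \<otimes>\<^bsub>C\<^esub> (g \<otimes>\<^bsub>C\<^esub> y) = y" if "y\<in>A" for y
    using g that by (metis Cg.l_inv Cg.m_assoc Cg.inv_closed Cg.l_one carrC)
  have "(g \<otimes>\<^bsub>C\<^esub> h \<otimes>\<^bsub>C\<^esub> inv\<^bsub>C\<^esub> g) [^]\<^bsub>C\<^esub> Suc k
      = (g \<otimes>\<^bsub>C\<^esub> (h [^]\<^bsub>C\<^esub> k) \<otimes>\<^bsub>C\<^esub> inv\<^bsub>C\<^esub> g) \<otimes>\<^bsub>C\<^esub> (g \<otimes>\<^bsub>C\<^esub> h \<otimes>\<^bsub>C\<^esub> inv\<^bsub>C\<^esub> g)"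
    using Suc by (simp del: multC)
  also have "\<dots> = g \<otimes>\<^bsub>C\<^esub> ((h [^]\<^bsub>C\<^esub> k) \<otimes>\<^bsub>C\<^esub> (inv\<^bsub>C\<^esub> g \<otimes>\<^bsub>C\<^esub> (g \<otimes>\<^bsub>C\<^esub> (h \<otimes>\<^bsub>C\<^esub> inv\<^bsub>C\<^esub> g))))"
    using g h Cg.nat_pow_closed[of h k] Cg.inv_closed[of g] by (simp add: cm_assoc)
  also have "\<dots> = g \<otimes>\<^bsub>C\<^esub> (h [^]\<^bsub>C\<^esub> Suc k) \<otimes>\<^bsub>C\<^esub> inv\<^bsub>C\<^esub> g"
    using g h c Cg.nat_pow_closed[of h k] Cg.inv_closed[of g] by (simp add: cm_assoc Cg.nat_pow_Suc)
  finally show ?case .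
qed
end

context brc begin
lemma ev_X': "addv f \<Longrightarrow> y\<in>A \<Longrightarrow> ev f [:0, Suc 0:] y = f y" using ev_X by simp
end

context pbrc begin

definition hP where "hP = (SOME h. Pp p = [:0,1:]^(p-1) + of_nat p * (1 + [:0,1:]*h))"
lemma hP: "Pp p = [:0,1:]^(p-1) + of_nat p * (1 + [:0,1:]*hP)"
  unfolding hP_def using someI_ex[OF Pp_prime[OF pr]] .
definition Q where "Q = 1 + [:0,1:] * hP"

lemma circ_p: assumes a: "a\<in>A" shows "a [^]\<^bsub>C\<^esub> p = ev (Nop a) Q (sm p a)"
proof -
  let ?N = "Nop a"
  have f: "addv ?N" using addv_Nop a by simp
  have "a [^]\<^bsub>C\<^esub> p = ev ?N (Pp p) a" using ev_Pp[OF a] by simp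
  also have "\<dots> = ad ((?N ^^ (p-1)) a) (sm p (ev ?N Q a))"
    unfolding hP Q_def[symmetric] using f a
    by (simp add: ev_add ev_mult ev_Xpow ev_Xpow' ev_of_nat del: mult_pCons_left mult_pCons_right)
  also have "(?N ^^ (p-1)) a = z" using Nnil[OF a a] pn by simp
  also have "ad z (sm p (ev ?N Q a)) = sm p (ev ?N Q a)" using f a by simp
  also have "\<dots> = ev ?N Q (sm p a)" using addv_sm[OF ev_addv[OF f] a] by simp
  finally show ?thesis .
qed

lemma Q_inj: assumes a: "a\<in>A" and w: "w\<in>A" and eq: "ev (Nop a) Q w = z" shows "w = z"
proof -
  let ?N = "Nop a" and ?H = "ev (Nop a) hP"
  have f: "addv ?N" using addv_Nop a by simp
  have fH: "addv ?H" using ev_addv[OF f] .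
  have Qw: "ev ?N Q w = ad w (?N (?H w))" unfolding Q_def using f w
    by (simp add: ev_add ev_one ev_mult ev_X ev_X' del: mult_pCons_left mult_pCons_right)
  have "j \<le> n \<Longrightarrow> (?N ^^ (n - j)) w = z" for j
  proof (induct j)
    case 0 thus ?case using Nnil[OF a w] by simp
  next
    case (Suc j)
    define k where "k = n - Suc j"
    have nk: "n - j = Suc k" using Suc(2) unfolding k_def by simp
    have fk: "addv (?N ^^ k)" using addv_pow[OF f] .
    have Hw: "?H w \<in> A" using fH w addvD by blast
    have NHw: "?N (?H w) \<in> A" using f Hw addvD by blast
    have "(?N ^^ k) (?N (?H w)) = (?N ^^ Suc k) (?H w)" by (simp add: funpow_Suc_right del: funpow.simps)
    also have "\<dots> = ?H ((?N ^^ Suc k) w)" by (rule ev_commfpow[OF f w, symmetric])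
    also have "\<dots> = z" using Suc nk addv_z[OF fH] by simp
    finally have 1: "(?N ^^ k) (?N (?H w)) = z" .
    have "(?N ^^ k) (ev ?N Q w) = z" using eq funpow_z[OF f] by simp
    hence "ad ((?N ^^ k) w) ((?N ^^ k) (?N (?H w))) = z" using Qw addvD(2)[OF fk w NHw] by simp
    hence "(?N ^^ k) w = z" using 1 addvD(1)[OF fk w] by simp
    thus ?case unfolding k_def .
  qed
  from this[of n] show ?thesis by simp
qed

lemma key: assumes a: "a\<in>A" shows "a [^]\<^bsub>C\<^esub> (p^j) = z \<longleftrightarrow> sm (p^j) a = z"
  using a
proof (induct j arbitrary: a)
  case 0 thus ?case by simp
next
  case (Suc j)
  let ?b = "a [^]\<^bsub>C\<^esub> p"
  have b: "?b \<in> A" using Suc by simp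
  have f: "addv (Nop a)" using addv_Nop Suc by simp
  have fQ: "addv (ev (Nop a) Q)" using ev_addv[OF f] .
  have "a [^]\<^bsub>C\<^esub> (p^Suc j) = ?b [^]\<^bsub>C\<^esub> (p^j)"
    using Suc Cg.nat_pow_pow[of a p "p^j"] by simp
  hence "a [^]\<^bsub>C\<^esub> (p^Suc j) = z \<longleftrightarrow> sm (p^j) ?b = z" using Suc(1)[OF b] by simp
  also have "sm (p^j) ?b = ev (Nop a) Q (sm (p^Suc j) a)"
    using circ_p[OF Suc(2)] addv_sm[OF fQ] Suc(2) f by (simp add: sm_mult[symmetric] mult.commute[of "p^j" p])
  also have "\<dots> = z \<longleftrightarrow> sm (p^Suc j) a = z"
    using Q_inj[OF Suc(2)] Suc(2) addv_z[OF fQ] by auto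
  finally show ?case .
qed

end

context pbrc begin

lemma ideal_ann: "brace_ideal A ad z cm e (ann A ad z (p^i))"
proof -
  define I where "I = {a\<in>A. sm (p^i) a = z}"
  have annI: "ann A ad z (p^i) = I" unfolding I_def ann_def add_mult_def sm_def by simp
  have sI: "I \<subseteq> A" unfolding I_def by auto
  have zI: "z \<in> I" unfolding I_def by simp
  have keyI: "x \<in> I \<longleftrightarrow> x \<in> A \<and> x [^]\<^bsub>C\<^esub> (p^i) = e" for x
  proof -
    have "x \<in> A \<Longrightarrow> x [^]\<^bsub>C\<^esub> (p^i) = e \<longleftrightarrow> sm (p^i) x = z" using key[of x i] e_z by metis
    thus ?thesis unfolding I_def by auto
  qed
  have subG: "subgroup I G"
  proof (rule Gg.subgroupI)
    show "I \<subseteq> carrier G" using sI by simp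
    show "I \<noteq> {}" using zI by blast
  next
    fix x assume x: "x \<in> I"
    hence "x\<in>A" "sm (p^i) x = z" unfolding I_def by auto
    hence "sm (p^i) (ng x) = z" using addv_sm[OF addv_ngf, of x "p^i"] by simp
    thus "inv\<^bsub>G\<^esub> x \<in> I" unfolding I_def using \<open>x\<in>A\<close> by (simp add: ng_def[symmetric])
  next
    fix x y assume "x \<in> I" "y \<in> I"
    thus "x \<otimes>\<^bsub>G\<^esub> y \<in> I" unfolding I_def by (auto simp: sm_distr)
  qed
  have subC: "subgroup I C"
  proof (rule Cg.subgroupI)
    show "I \<subseteq> carrier C" using sI by simp
    show "I \<noteq> {}" using zI by blast
  next
    fix x assume x: "x \<in> I"
    hence xA: "x\<in>A" and xp: "x [^]\<^bsub>C\<^esub> (p^i) = e" using keyI by auto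
    have "(inv\<^bsub>C\<^esub> x) [^]\<^bsub>C\<^esub> (p^i) = inv\<^bsub>C\<^esub> (x [^]\<^bsub>C\<^esub> (p^i))"
      using Cg.nat_pow_inv xA by simp
    also have "\<dots> = inv\<^bsub>C\<^esub> e" using xp by simp
    also have "\<dots> = e" using Cg.inv_one by simp
    finally show "inv\<^bsub>C\<^esub> x \<in> I" using keyI xA Cg.inv_closed by simp
  next
    fix x y assume "x \<in> I" "y \<in> I"
    hence xy: "x\<in>A" "y\<in>A" "sm (p^i) y = z" unfolding I_def by auto
    have "sm (p^i) (lam x y) = lam x (sm (p^i) y)" using addv_sm[OF addv_lam[OF xy(1)] xy(2)] by simp
    also have "\<dots> = z" using xy by simp
    finally have "sm (p^i) (lam x y) = z" .
    hence "sm (p^i) (cm x y) = z" using xy \<open>x\<in>I\<close> by (simp add: cm_lam sm_distr I_def)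
    thus "x \<otimes>\<^bsub>C\<^esub> y \<in> I" unfolding I_def using xy by simp
  qed
  have norm: "normal I C"
    unfolding Cg.normal_inv_iff
  proof (intro conjI subC ballI)
    fix g h assume g: "g \<in> carrier C" and h: "h \<in> I"
    have gA: "g\<in>A" using g by simp
    have hA: "h\<in>A" and hp: "h [^]\<^bsub>C\<^esub> (p^i) = e" using h keyI by auto
    have "(g \<otimes>\<^bsub>C\<^esub> h \<otimes>\<^bsub>C\<^esub> inv\<^bsub>C\<^esub> g) [^]\<^bsub>C\<^esub> (p^i) = g \<otimes>\<^bsub>C\<^esub> (h [^]\<^bsub>C\<^esub> (p^i)) \<otimes>\<^bsub>C\<^esub> inv\<^bsub>C\<^esub> g"
      by (rule conj_pow[OF gA hA])
    also have "\<dots> = g \<otimes>\<^bsub>C\<^esub> e \<otimes>\<^bsub>C\<^esub> inv\<^bsub>C\<^esub> g" using hp by simp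
    also have "\<dots> = e" using gA Cg.r_inv[of g] by simp
    finally show "g \<otimes>\<^bsub>C\<^esub> h \<otimes>\<^bsub>C\<^esub> inv\<^bsub>C\<^esub> g \<in> I"
      using keyI gA hA Cg.inv_closed[of g] by simp
  qed
  have star: "\<forall>a\<in>A. \<forall>x\<in>I. brace_star A ad z cm a x \<in> I"
  proof (intro ballI)
    fix a x assume a: "a\<in>A" and x: "x\<in>I"
    hence xA: "x\<in>A" and xp: "sm (p^i) x = z" unfolding I_def by auto
    have bs: "brace_star A ad z cm a x = Nop a x"
      unfolding brace_star_def Nop_def lam_def ng_def by simp
    have "sm (p^i) (Nop a x) = Nop a (sm (p^i) x)" using addv_sm[OF addv_Nop[OF a] xA] by simp
    also have "\<dots> = z" using xp addv_z[OF addv_Nop[OF a]] by simp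
    finally show "brace_star A ad z cm a x \<in> I" unfolding I_def bs
      using addv_Nop[OF a] addvD xA by auto
  qed
  show ?thesis unfolding brace_ideal_def annI using subG norm star by blast
qed

end

theorem lemma15:
  fixes A :: "'a set" and ad cm :: "'a \<Rightarrow> 'a \<Rightarrow> 'a" and z e :: 'a
    and p n i :: nat
  assumes "brace A ad z cm e"
    and "finite A" and "card A = p ^ n"
    and "Factorial_Ring.prime p" and "p > n + 1"
  shows "brace_ideal A ad z cm e (ann A ad z (p ^ i))"
proof -
  interpret pbrc A ad z cm e p n
    using assms by (unfold_locales) auto
  show ?thesis by (rule ideal_ann)
qed

end
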